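(* Let $V$ be a reflexive Banach space, $X$ a Banach space, $\gamma\in\mathcal{L}(V,X)$ with $c_\gamma:=\|\gamma\|_{\mathcal{L}(V,X)}$ and adjoint $\gamma^*\colon X^*\to V^*$. Let $A\colon V\to V^*$, $J\colon X\times X\to\mathbb{R}$ and $f\in V^*$ satisfy: (A1) $A$ is linear and bounded; (A2) $\langle Au,v\rangle_{V^*\times V}=\langle Av,u\rangle_{V^*\times V}$ for all $u,v\in V$; (A3) there is $m_A>0$ with $\langle Au,u\rangle_{V^*\times V}\ge m_A\|u\|_V^2$ for all $u\in V$; (J1) $J$ is locally Lipschitz continuous with respect to its second variable; (J2) there exist $c_0,c_1,c_2\ge 0$ with $\|\partial_2 J(w,v)\|_{X^*}\le c_0+c_1\|v\|_X+c_2\|w\|_X$ for all $w,v\in X$; (J3) there exist $m_\alpha,m_L\ge0$ such that $J_2^0(w_1,v_1;v_2-v_1)+J_2^0(w_2,v_2;v_1-v_2)\le m_\alpha\|v_1-v_2\|_X^2+m_L\|w_1-w_2\|_X\|v_1-v_2\|_X$ for all $w_1,w_2,v_1,v_2\in X$; (S) $m_A>(m_\alpha+m_L)c_\gamma^2$. Define $\mathcal{L}\colon V\times V\to\mathbb{R}$ by $\mathcal{L}(w,v)=\tfrac12\langle Av,v\rangle_{V^*\times V}-\langle f,v\rangle_{V^*\times V}+J(\gamma w,\gamma v)$. Then there exists a unique $u\in V$ such that $0\in\partial_2\mathcal{L}(u,u)$.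
   Context: For a locally Lipschitz function $g$ on a Banach space $Y$, the generalized (Clarke) directional derivative at $x$ in direction $v$ is $g^0(x;v)=\limsup_{y\to x,\lambda\searrow0}\frac{g(y+\lambda v)-g(y)}{\lambda}$, and the Clarke subdifferential is $\partial g(x)=\{\xi\in Y^*:\langle\xi,v\rangle\le g^0(x;v)\ \forall v\in Y\}$. For a function of two variables, $\partial_2$ and $(\cdot)_2^0$ denote the Clarke subdifferential and generalized directional derivative with respect to the second variable. $\|\partial_2J(w,v)\|_{X^*}$ denotes $\sup\{\|\xi\|_{X^*}:\xi\in\partial_2J(w,v)\}$. *)

theory Defs
  imports "HOL-Analysis.Analysis"
begin

definition reflexive_space :: "'v::real_normed_vector itself \<Rightarrow> bool" where
  "reflexive_space _ \<longleftrightarrow>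
     (\<forall>\<Phi> :: ('v \<Rightarrow>\<^sub>L real) \<Rightarrow>\<^sub>L real. \<exists>v::'v. \<forall>\<xi>. blinfun_apply \<Phi> \<xi> = blinfun_apply \<xi> v)"

definition locally_lipschitz :: "('x::metric_space \<Rightarrow> real) \<Rightarrow> bool" where
  "locally_lipschitz g \<longleftrightarrow> (\<forall>x. \<exists>e>0. \<exists>L. L-lipschitz_on (ball x e) g)"

text \<open>Clarke generalized directional derivative
  g0(x;v) = limsup_{y \<rightarrow> x, t \<searrow> 0} (g(y + t v) - g y)/t
  (finite for locally Lipschitz g).\<close>
definition clarke_dd :: "('x::real_normed_vector \<Rightarrow> real) \<Rightarrow> 'x \<Rightarrow> 'x \<Rightarrow> real" where
  "clarke_dd g x v = real_of_ereal
     (Limsup (at (x, 0) within (UNIV \<times> {0<..}))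
        (\<lambda>(y, t::real). ereal ((g (y + t *\<^sub>R v) - g y) / t)))"

definition clarke_subdiff :: "('x::real_normed_vector \<Rightarrow> real) \<Rightarrow> 'x \<Rightarrow> ('x \<Rightarrow>\<^sub>L real) set" where
  "clarke_subdiff g x = {\<xi>. \<forall>v. blinfun_apply \<xi> v \<le> clarke_dd g x v}"

end

theory Submission
  imports Defs
begin


definition CF :: "'a::real_normed_vector \<Rightarrow> ('a \<times> real) filter" where
  "CF x = at (x, 0) within (UNIV \<times> {0<..})"

definition dq :: "('a::real_normed_vector \<Rightarrow> real) \<Rightarrow> 'a \<Rightarrow> 'a \<times> real \<Rightarrow> real" where
  "dq g v p = (g (fst p + snd p *\<^sub>R v) - g (fst p)) / snd p"

lemma cdd_alt: "clarke_dd g x v = real_of_ereal (Limsup (CF x) (\<lambda>p. ereal (dq g v p)))"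
  unfolding clarke_dd_def CF_def dq_def by (simp only: case_prod_unfold)

lemma CF_nontriv: "CF x \<noteq> bot"
proof -
  have "(x, 0::real) islimpt (UNIV \<times> {0<..})"
    unfolding islimpt_approachable
  proof (intro allI impI)
    fix e :: real assume "e > 0"
    then show "\<exists>x'\<in>UNIV \<times> {0<..}. x' \<noteq> (x, 0::real) \<and> dist x' (x, 0) < e"
    proof -
      have d: "dist (x, e / 2) (x, 0) < e" using \<open>e > 0\<close> by (simp add: dist_Pair_Pair dist_real_def)
      show ?thesis apply (rule_tac x="(x, e/2)" in bexI) using d \<open>e > 0\<close> by auto
    qed
  qed
  then show ?thesis unfolding CF_def using trivial_limit_within[of "(x, 0::real)" "UNIV \<times> {0<..}"] by simp
qed

lemma CF_fst: "(fst \<longlongrightarrow> x) (CF x)"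
proof -
  have "((\<lambda>p. fst p) \<longlongrightarrow> fst (x, 0::real)) (CF x)"
    unfolding CF_def by (intro tendsto_fst tendsto_ident_at)
  then show ?thesis by simp
qed

lemma CF_snd: "(snd \<longlongrightarrow> 0) (CF x)"
proof -
  have "((\<lambda>p. snd p) \<longlongrightarrow> snd (x, 0::real)) (CF x)"
    unfolding CF_def by (intro tendsto_snd tendsto_ident_at)
  then show ?thesis by simp
qed

lemma CF_pos: "eventually (\<lambda>p. snd p > 0) (CF x)"
  unfolding CF_def eventually_at_filter by (auto intro: always_eventually)

lemma freq_CF:
  assumes l: "l > 0" and fr: "\<exists>\<^sub>F \<tau> in at_right 0. P \<tau>"
  shows "\<exists>\<^sub>F p in CF a. fst p = a \<and> snd p > 0 \<and> P (snd p * l)"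
proof -
  have l0: "l \<noteq> 0" using l by simp
  have lim: "filterlim (\<lambda>\<tau>. (a, \<tau> / l)) (CF a) (at_right 0)"
    unfolding CF_def filterlim_at
  proof
    show "\<forall>\<^sub>F \<tau> in at_right 0. (a, \<tau> / l) \<in> UNIV \<times> {0<..} \<and> (a, \<tau> / l) \<noteq> (a, 0)"
      using l l0 by (auto simp: eventually_at_right_field intro!: exI[of _ 1])
    have "((\<lambda>\<tau>. (a, \<tau> / l)) \<longlongrightarrow> (a, 0 / l)) (at_right 0)"
      using l0 by (intro tendsto_intros tendsto_ident_at)
    then show "((\<lambda>\<tau>. (a, \<tau> / l)) \<longlongrightarrow> (a, 0)) (at_right 0)" by simp
  qed
  show ?thesis
  proof (rule ccontr)
    assume "\<not> ?thesis"
    then have ev: "eventually (\<lambda>p. \<not> (fst p = a \<and> snd p > 0 \<and> P (snd p * l))) (CF a)"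
      by (simp add: frequently_def)
    have ev': "eventually (\<lambda>\<tau>. \<not> (fst (a, \<tau>/l) = a \<and> snd (a, \<tau>/l) > 0 \<and> P (snd (a, \<tau>/l) * l))) (at_right 0)"
      using filterlim_iff[THEN iffD1, OF lim, rule_format, OF ev] .
    moreover have "eventually (\<lambda>\<tau>::real. \<tau> > 0) (at_right 0)"
      by (simp add: eventually_at_right_field) (auto intro!: exI[of _ 1])
    ultimately have "eventually (\<lambda>\<tau>. \<not> P \<tau>) (at_right 0)"
    proof eventually_elim
      case (elim \<tau>)
      have "\<tau>/l * l = \<tau>" using l by simp
      moreover have "\<tau>/l > 0" using l elim by simp
      ultimately show ?case using elim(1) by simp
    qed
    then show False using fr by (simp add: frequently_def)
  qed
qed

lemma llip_bound:
  assumes e: "e > 0" and lip: "L-lipschitz_on (ball x e) g"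
  shows "eventually (\<lambda>p. \<bar>dq g v p\<bar> \<le> L * norm v) (CF x)"
proof -
  have L0: "L \<ge> 0" using lipschitz_on_nonneg[OF lip] .
  have e2: "e/2 > 0" using e by simp
  have ev1: "eventually (\<lambda>p. dist (fst p) x < e/2) (CF x)"
    using tendstoD[OF CF_fst e2] .
  have "((\<lambda>p. snd p *\<^sub>R v) \<longlongrightarrow> 0 *\<^sub>R v) (CF x)"
    by (intro tendsto_intros CF_snd)
  then have ev2: "eventually (\<lambda>p. dist (snd p *\<^sub>R v) 0 < e/2) (CF x)"
    using tendstoD e2 by fastforce
  show ?thesis
    using ev1 ev2 CF_pos
  proof eventually_elim
    case (elim p)
    define y where "y = fst p"
    define t where "t = snd p"
    have t: "t > 0" using elim t_def by simp
    have "dist x y < e/2" using elim y_def by (simp add: dist_commute)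
    then have "dist x y < e" using zero_le_dist[of x y] by linarith
    then have yb: "y \<in> ball x e" by simp
    have n1: "norm (t *\<^sub>R v) < e/2" using elim t_def by simp
    have d1: "dist (y + t *\<^sub>R v) y = norm (t *\<^sub>R v)" by (simp add: dist_norm)
    have d2: "dist y x < e/2" using elim y_def by simp
    have "dist (y + t *\<^sub>R v) x \<le> dist (y + t *\<^sub>R v) y + dist y x" by (rule dist_triangle)
    then have "dist (y + t *\<^sub>R v) x < e" using n1 d1 d2 by linarith
    then have yb2: "y + t *\<^sub>R v \<in> ball x e" by (simp add: dist_commute)
    have "\<bar>g (y + t *\<^sub>R v) - g y\<bar> \<le> L * dist (y + t *\<^sub>R v) y"
      using lipschitz_onD[OF lip yb2 yb] by (simp add: dist_real_def)
    also have "\<dots> = L * (t * norm v)" using t d1 by simp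
    finally have "\<bar>g (y + t *\<^sub>R v) - g y\<bar> \<le> t * (L * norm v)" by (simp add: mult_ac)
    then have "\<bar>g (y + t *\<^sub>R v) - g y\<bar> / t \<le> L * norm v"
      using t by (simp add: divide_le_eq mult.commute)
    then show ?case using t unfolding dq_def y_def[symmetric] t_def[symmetric] by simp
  qed
qed

lemma cdd_Limsup:
  assumes e: "e > 0" and lip: "L-lipschitz_on (ball x e) g"
  shows "Limsup (CF x) (\<lambda>p. ereal (dq g v p)) = ereal (clarke_dd g x v)"
proof -
  have ev: "eventually (\<lambda>p. \<bar>dq g v p\<bar> \<le> L * norm v) (CF x)" by (rule llip_bound[OF e lip])
  have "Limsup (CF x) (\<lambda>p. ereal (dq g v p)) \<le> ereal (L * norm v)"
    by (rule Limsup_bounded) (use ev in \<open>eventually_elim, auto\<close>)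
  moreover have "ereal (- (L * norm v)) \<le> Limsup (CF x) (\<lambda>p. ereal (dq g v p))"
    by (rule le_Limsup[OF CF_nontriv]) (use ev in \<open>eventually_elim, auto\<close>)
  ultimately have "\<bar>Limsup (CF x) (\<lambda>p. ereal (dq g v p))\<bar> \<noteq> \<infinity>" by auto
  then show ?thesis unfolding cdd_alt by (rule ereal_real'[symmetric])
qed

lemma cdd_upper:
  assumes e: "e > 0" and lip: "L-lipschitz_on (ball x e) g"
    and H: "\<And>\<epsilon>. \<epsilon> > 0 \<Longrightarrow> eventually (\<lambda>p. dq g v p \<le> b + \<epsilon>) (CF x)"
  shows "clarke_dd g x v \<le> b"
proof -
  have "Limsup (CF x) (\<lambda>p. ereal (dq g v p)) \<le> ereal b"
    unfolding Limsup_le_iff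
  proof (intro allI impI)
    fix y assume y: "y > ereal b"
    show "\<forall>\<^sub>F p in CF x. ereal (dq g v p) < y"
    proof (cases y)
      case (real r)
      then have "r - b > 0" using y by simp
      then have "eventually (\<lambda>p. dq g v p \<le> b + (r - b)/2) (CF x)" using H by simp
      then show ?thesis
      proof eventually_elim
        case (elim p)
        have "dq g v p < r" using elim \<open>r - b > 0\<close> by argo
        then show ?case using real by simp
      qed
    next
      case PInf then show ?thesis by simp
    next
      case MInf then show ?thesis using y by simp
    qed
  qed
  then show ?thesis using cdd_Limsup[OF e lip] by simp
qed

lemma cdd_lower:
  assumes e: "e > 0" and lip: "L-lipschitz_on (ball x e) g"
    and H: "\<exists>\<^sub>F p in CF x. c \<le> dq g v p"
  shows "c \<le> clarke_dd g x v"
proof (rule ccontr)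
  assume "\<not> ?thesis"
  then have "ereal c > Limsup (CF x) (\<lambda>p. ereal (dq g v p))"
    using cdd_Limsup[OF e lip] by simp
  from Limsup_lessD[OF this] have "eventually (\<lambda>p. \<not> c \<le> dq g v p) (CF x)"
    by eventually_elim auto
  then show False using H by (simp add: frequently_def)
qed

lemma cdd_ev:
  assumes e: "e > 0" and lip: "L-lipschitz_on (ball x e) g" and eps: "\<epsilon> > 0"
  shows "eventually (\<lambda>p. dq g v p < clarke_dd g x v + \<epsilon>) (CF x)"
proof -
  have "ereal (clarke_dd g x v + \<epsilon>) > Limsup (CF x) (\<lambda>p. ereal (dq g v p))"
    using cdd_Limsup[OF e lip] eps by simp
  from Limsup_lessD[OF this] show ?thesis by eventually_elim auto
qed




lemma mvl:
  fixes h :: "real \<Rightarrow> real"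
  assumes ab: "a \<le> b" and cont: "continuous_on {a..b} h"
    and loc: "\<forall>q\<in>{a..<b}. eventually (\<lambda>\<tau>. h (q + \<tau>) - h q \<le> c * \<tau>) (at_right 0)"
  shows "h b - h a \<le> c * (b - a)"
proof -
  define g where "g r = h r - h a - c * (r - a)" for r
  have gcont: "continuous_on {a..b} g" unfolding g_def by (intro continuous_intros cont)
  define S where "S = {r\<in>{a..b}. \<forall>q\<in>{a..r}. g q \<le> 0}"
  have aS: "a \<in> S" using ab by (auto simp: S_def g_def)
  have Sne: "S \<noteq> {}" using aS by blast
  have bdd: "bdd_above S" unfolding S_def bdd_above_def by auto
  define s where "s = Sup S"
  have as: "a \<le> s" unfolding s_def by (rule cSup_upper[OF aS bdd])
  have sb: "s \<le> b" unfolding s_def by (rule cSup_least[OF Sne]) (auto simp: S_def)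
  have H1: "g q \<le> 0" if qa: "a \<le> q" "q < s" for q
  proof -
    obtain r where r: "r \<in> S" "q < r" using less_cSupD[OF Sne, of q] qa s_def by auto
    then show ?thesis using qa by (auto simp: S_def)
  qed
  have H2: "g s \<le> 0"
  proof (cases "a = s")
    case True then show ?thesis by (simp add: g_def)
  next
    case False
    then have as': "a < s" using as by simp
    have c2: "continuous_on {a..s} g" by (rule continuous_on_subset[OF gcont]) (use sb in auto)
    have lim: "(g \<longlongrightarrow> g s) (at_left s)" by (rule continuous_on_Icc_at_leftD[OF c2 as'])
    have ev: "eventually (\<lambda>x. x \<in> {a<..<s}) (at_left s)" by (rule eventually_at_left_real[OF as'])
    have "eventually (\<lambda>x. g x \<le> 0) (at_left s)"
      using ev by eventually_elim (auto intro: H1)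
    then show ?thesis using tendsto_upperbound[OF lim] by simp
  qed
  have sS: "s \<in> S"
    unfolding S_def
  proof (intro CollectI conjI ballI)
    show "s \<in> {a..b}" using as sb by simp
    fix q assume q: "q \<in> {a..s}"
    show "g q \<le> 0"
    proof (cases "q < s")
      case True then show ?thesis using H1 q by simp
    next
      case False then have "q = s" using q by simp
      then show ?thesis using H2 by simp
    qed
  qed
  show ?thesis
  proof (cases "s = b")
    case True
    then have "g b \<le> 0" using H2 by simp
    then show ?thesis by (simp add: g_def)
  next
    case False
    then have sb': "s < b" using sb by simp
    then have "s \<in> {a..<b}" using as by simp
    then have "eventually (\<lambda>\<tau>. h (s + \<tau>) - h s \<le> c * \<tau>) (at_right 0)" using loc by blast
    then obtain d where d: "d > 0" "\<And>\<tau>. \<tau> > 0 \<Longrightarrow> \<tau> < d \<Longrightarrow> h (s + \<tau>) - h s \<le> c * \<tau>"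
      unfolding eventually_at_right_field by auto
    define r where "r = min b (s + d/2)"
    have sr: "s < r" using sb' d by (simp add: r_def)
    have rS: "r \<in> S"
      unfolding S_def
    proof (intro CollectI conjI ballI)
      show "r \<in> {a..b}" using as sr by (auto simp: r_def)
      fix q assume q: "q \<in> {a..r}"
      show "g q \<le> 0"
      proof (cases "q \<le> s")
        case True then show ?thesis using sS q by (auto simp: S_def)
      next
        case False
        define \<tau> where "\<tau> = q - s"
        have t0: "\<tau> > 0" using False by (simp add: \<tau>_def)
        have t1: "\<tau> < d" using q d by (auto simp: \<tau>_def r_def)
        have "h (s + \<tau>) - h s \<le> c * \<tau>" by (rule d(2)[OF t0 t1])
        then have "g q \<le> g s" by (simp add: g_def \<tau>_def algebra_simps)
        then show ?thesis using H2 by simp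
      qed
    qed
    have "r \<le> s" unfolding s_def by (rule cSup_upper[OF rS bdd])
    then show ?thesis using sr by simp
  qed
qed

lemma mvl_freq:
  fixes h :: "real \<Rightarrow> real"
  assumes ab: "a \<le> b" and cont: "continuous_on {a..b} h"
    and gt: "h b - h a > c * (b - a)"
  shows "\<exists>q\<in>{a..<b}. \<exists>\<^sub>F \<tau> in at_right 0. h (q + \<tau>) - h q > c * \<tau>"
proof (rule ccontr)
  assume "\<not> ?thesis"
  then have "\<forall>q\<in>{a..<b}. eventually (\<lambda>\<tau>. h (q + \<tau>) - h q \<le> c * \<tau>) (at_right 0)"
    by (auto simp: frequently_def not_less)
  from mvl[OF ab cont this] show False using gt by simp
qed

lemma conv1d:
  fixes h :: "real \<Rightarrow> real"
  assumes cont: "continuous_on {0..1} h"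
    and H: "\<And>q q' c1 c2. 0 \<le> q \<Longrightarrow> q < q' \<Longrightarrow> q' \<le> 1 \<Longrightarrow> c2 < c1 \<Longrightarrow>
      (\<exists>\<^sub>F \<tau> in at_right 0. h (q + \<tau>) - h q > c1 * \<tau>) \<Longrightarrow>
      (\<exists>\<^sub>F \<tau> in at_right 0. h (q' - \<tau>) - h q' > - c2 * \<tau>) \<Longrightarrow> False"
    and r: "0 \<le> r" "r \<le> 1"
  shows "h r \<le> (1 - r) * h 0 + r * h 1"
proof (rule ccontr)
  assume neg: "\<not> ?thesis"
  have r0: "r \<noteq> 0" using neg by auto
  have r1: "r \<noteq> 1" using neg by auto
  have rr: "0 < r" "r < 1" using r r0 r1 by auto
  define D where "D = h 1 - h 0"
  define s1 where "s1 = (h r - h 0) / r"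
  define s2 where "s2 = (h 1 - h r) / (1 - r)"
  have "h r - h 0 > r * D" using neg by (simp add: D_def algebra_simps)
  then have s1D: "s1 > D" using rr by (simp add: s1_def field_simps)
  have "h 1 - h r < (1 - r) * D" using neg by (simp add: D_def algebra_simps)
  then have s2D: "s2 < D" using rr by (simp add: s2_def field_simps)
  define c1 where "c1 = (s1 + D) / 2"
  define c2 where "c2 = (s2 + D) / 2"
  have c12: "c2 < c1" using s1D s2D by (simp add: c1_def c2_def)
  have "h r - h 0 > c1 * (r - 0)"
  proof -
    have "c1 < s1" using s1D by (simp add: c1_def)
    then have "c1 * r < s1 * r" using rr by simp
    also have "s1 * r = h r - h 0" using rr by (simp add: s1_def)
    finally show ?thesis by simp
  qed
  moreover have "continuous_on {0..r} h" by (rule continuous_on_subset[OF cont]) (use rr in auto)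
  ultimately obtain q where q: "q \<in> {0..<r}" "\<exists>\<^sub>F \<tau> in at_right 0. h (q + \<tau>) - h q > c1 * \<tau>"
    using mvl_freq[of 0 r h c1] rr by auto
  define k where "k t = h (- t)" for t
  have kc: "continuous_on {-1..-r} k"
  proof -
    have c: "continuous_on {r..1} h" by (rule continuous_on_subset[OF cont]) (use rr in auto)
    have "continuous_on {-1..-r} (\<lambda>t. h (- t))"
      by (rule continuous_on_compose2[OF c]) (auto intro: continuous_intros)
    then show ?thesis by (simp add: k_def)
  qed
  have "k (-r) - k (-1) > (- c2) * (- r - (- 1))"
  proof -
    have "s2 < c2" using s2D by (simp add: c2_def)
    then have "s2 * (1 - r) < c2 * (1 - r)" using rr by simp
    also have "s2 * (1 - r) = h 1 - h r" using rr by (simp add: s2_def)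
    finally show ?thesis by (simp add: k_def algebra_simps)
  qed
  then obtain p where p: "p \<in> {-1..<-r}" "\<exists>\<^sub>F \<tau> in at_right 0. k (p + \<tau>) - k p > (- c2) * \<tau>"
    using mvl_freq[of "-1" "-r" k "- c2"] kc rr by auto
  define q' where "q' = - p"
  have q'r: "r < q'" "q' \<le> 1" using p by (auto simp: q'_def)
  have fq': "\<exists>\<^sub>F \<tau> in at_right 0. h (q' - \<tau>) - h q' > - c2 * \<tau>"
    using p(2) by (simp add: k_def q'_def)
  show False
    using H[of q q' c2 c1] q q'r fq' c12 by auto
qed




locale setting =
  fixes \<gamma> :: "'v::banach \<Rightarrow>\<^sub>L 'x::banach"
    and A :: "'v \<Rightarrow>\<^sub>L ('v \<Rightarrow>\<^sub>L real)"
    and f :: "'v \<Rightarrow>\<^sub>L real"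
    and J :: "'x \<Rightarrow> 'x \<Rightarrow> real"
    and mA ma mL :: real
  assumes A2: "\<forall>u v. A u v = A v u"
    and A3: "mA > 0" "\<forall>u. A u u \<ge> mA * (norm u)\<^sup>2"
    and J1: "\<forall>w. locally_lipschitz (J w)"
    and J3: "ma \<ge> 0" "mL \<ge> 0"
      "\<forall>w1 w2 v1 v2. clarke_dd (J w1) v1 (v2 - v1) + clarke_dd (J w2) v2 (v1 - v2)
          \<le> ma * (norm (v1 - v2))\<^sup>2 + mL * norm (w1 - w2) * norm (v1 - v2)"
    and S: "mA > (ma + mL) * (norm \<gamma>)\<^sup>2"
begin

definition gb :: "real \<Rightarrow> 'v \<Rightarrow> 'v \<Rightarrow> real" where
  "gb \<beta> w v = (\<beta>/2) * A v v - f v + J (\<gamma> w) (\<gamma> v)"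

lemma quad_bound: "\<bar>A y y - A z z\<bar> \<le> norm A * (norm y + norm z) * norm (y - z)"
proof -
  have eq: "A y y - A z z = A (y - z) y + A z (y - z)"
    by (simp add: blinfun.bilinear_simps)
  have b1: "\<bar>A (y - z) y\<bar> \<le> norm A * norm (y - z) * norm y"
  proof -
    have "\<bar>A (y - z) y\<bar> \<le> norm (A (y - z)) * norm y" using norm_blinfun[of "A (y - z)" y] by simp
    also have "\<dots> \<le> norm A * norm (y - z) * norm y"
      by (rule mult_right_mono[OF norm_blinfun norm_ge_zero])
    finally show ?thesis .
  qed
  have b2: "\<bar>A z (y - z)\<bar> \<le> norm A * norm z * norm (y - z)"
  proof -
    have "\<bar>A z (y - z)\<bar> \<le> norm (A z) * norm (y - z)" using norm_blinfun[of "A z" "y - z"] by simp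
    also have "\<dots> \<le> norm A * norm z * norm (y - z)"
      by (rule mult_right_mono[OF norm_blinfun norm_ge_zero])
    finally show ?thesis .
  qed
  have "\<bar>A y y - A z z\<bar> \<le> \<bar>A (y - z) y\<bar> + \<bar>A z (y - z)\<bar>" unfolding eq by (rule abs_triangle_ineq)
  also have "\<dots> \<le> norm A * norm (y - z) * norm y + norm A * norm z * norm (y - z)"
    using b1 b2 by (rule add_mono)
  also have "\<dots> = norm A * (norm y + norm z) * norm (y - z)" by (simp add: algebra_simps)
  finally show ?thesis .
qed

lemma llip_gb: "\<exists>e>0. \<exists>L. L-lipschitz_on (ball x e) (gb \<beta> w)"
proof -
  obtain e L where e: "e > 0" and lip: "L-lipschitz_on (ball (\<gamma> x) e) (J (\<gamma> w))"
    using J1 unfolding locally_lipschitz_def by blast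
  have L0: "L \<ge> 0" using lipschitz_on_nonneg[OF lip] .
  define cg where "cg = norm \<gamma>"
  have cg0: "cg \<ge> 0" by (simp add: cg_def)
  define d where "d = min 1 (e / (cg + 1))"
  have d0: "d > 0" using e cg0 by (simp add: d_def)
  have inb: "\<gamma> y \<in> ball (\<gamma> x) e" if "y \<in> ball x d" for y
  proof -
    have "norm (\<gamma> x - \<gamma> y) \<le> cg * norm (x - y)"
      unfolding cg_def blinfun.diff_right[symmetric] by (rule norm_blinfun)
    also have "\<dots> \<le> cg * d" using that cg0 by (intro mult_left_mono) (auto simp: dist_norm)
    also have "\<dots> \<le> cg * (e / (cg + 1))" using cg0 by (intro mult_left_mono) (auto simp: d_def)
    also have "\<dots> < e" using e cg0 by (simp add: field_simps)
    finally show ?thesis by (simp add: dist_norm)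
  qed
  define K where "K = \<bar>\<beta>\<bar>/2 * (norm A * (2 * (norm x + 1))) + norm f + L * cg"
  have "K-lipschitz_on (ball x d) (gb \<beta> w)"
  proof (rule lipschitz_onI)
    show "0 \<le> K" unfolding K_def using L0 cg0 by (intro add_nonneg_nonneg mult_nonneg_nonneg) auto
    fix y z assume y: "y \<in> ball x d" and z: "z \<in> ball x d"
    have ny: "norm y \<le> norm x + 1"
      using y d0 norm_triangle_ineq2[of y x] by (auto simp: d_def dist_norm norm_minus_commute)
    have nz: "norm z \<le> norm x + 1"
      using z d0 norm_triangle_ineq2[of z x] by (auto simp: d_def dist_norm norm_minus_commute)
    have q: "\<bar>A y y - A z z\<bar> \<le> norm A * (2 * (norm x + 1)) * norm (y - z)"
    proof -
      have "\<bar>A y y - A z z\<bar> \<le> norm A * (norm y + norm z) * norm (y - z)" by (rule quad_bound)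
      also have "\<dots> \<le> norm A * (2 * (norm x + 1)) * norm (y - z)"
        using ny nz by (intro mult_right_mono mult_left_mono) auto
      finally show ?thesis .
    qed
    have fl: "\<bar>f y - f z\<bar> \<le> norm f * norm (y - z)"
      using norm_blinfun[of f "y - z"] by (simp add: blinfun.diff_right)
    have jl: "\<bar>J (\<gamma> w) (\<gamma> y) - J (\<gamma> w) (\<gamma> z)\<bar> \<le> L * cg * norm (y - z)"
    proof -
      have "\<bar>J (\<gamma> w) (\<gamma> y) - J (\<gamma> w) (\<gamma> z)\<bar> \<le> L * dist (\<gamma> y) (\<gamma> z)"
        using lipschitz_onD[OF lip inb[OF y] inb[OF z]] by (simp add: dist_real_def)
      also have "dist (\<gamma> y) (\<gamma> z) \<le> cg * norm (y - z)"
        unfolding dist_norm cg_def blinfun.diff_right[symmetric] by (rule norm_blinfun)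
      then have "L * dist (\<gamma> y) (\<gamma> z) \<le> L * (cg * norm (y - z))" using L0 by (rule mult_left_mono)
      finally show ?thesis by (simp add: mult_ac)
    qed
    have "gb \<beta> w y - gb \<beta> w z = (\<beta>/2) * (A y y - A z z) - (f y - f z) + (J (\<gamma> w) (\<gamma> y) - J (\<gamma> w) (\<gamma> z))"
      by (simp add: gb_def algebra_simps)
    then have "\<bar>gb \<beta> w y - gb \<beta> w z\<bar> \<le> \<bar>\<beta>\<bar>/2 * \<bar>A y y - A z z\<bar> + \<bar>f y - f z\<bar> + \<bar>J (\<gamma> w) (\<gamma> y) - J (\<gamma> w) (\<gamma> z)\<bar>"
    proof -
      have tri: "\<bar>p - q + r\<bar> \<le> \<bar>p\<bar> + \<bar>q\<bar> + \<bar>r\<bar>" for p q r :: real by arith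
      have "\<bar>(\<beta>/2) * (A y y - A z z)\<bar> = \<bar>\<beta>\<bar>/2 * \<bar>A y y - A z z\<bar>" by (simp add: abs_mult)
      then show ?thesis using tri[of "(\<beta>/2) * (A y y - A z z)" "f y - f z" "J (\<gamma> w) (\<gamma> y) - J (\<gamma> w) (\<gamma> z)"]
        by (simp only: \<open>gb \<beta> w y - gb \<beta> w z = _\<close>)
    qed
    also have "\<dots> \<le> \<bar>\<beta>\<bar>/2 * (norm A * (2 * (norm x + 1)) * norm (y - z)) + norm f * norm (y - z) + L * cg * norm (y - z)"
      using q fl jl by (intro add_mono mult_left_mono) auto
    also have "\<dots> = K * dist y z" by (simp add: K_def dist_norm algebra_simps)
    finally show "dist (gb \<beta> w y) (gb \<beta> w z) \<le> K * dist y z" by (simp add: dist_real_def)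
  qed
  then show ?thesis using d0 by blast
qed

lemma cont_gb: "isCont (gb \<beta> w) x"
proof -
  obtain e L where e: "e > 0" and lip: "L-lipschitz_on (ball x e) (gb \<beta> w)" using llip_gb by blast
  have "continuous_on (ball x e) (gb \<beta> w)" by (rule lipschitz_on_continuous_on[OF lip])
  then show ?thesis using e by (simp add: continuous_on_eq_continuous_at)
qed

end



context setting begin

lemma dq_gb:
  assumes t: "snd p \<noteq> 0"
  shows "dq (gb \<beta> w) v p = \<beta> * A (fst p) v + \<beta> * snd p / 2 * A v v - f v
          + dq (J (\<gamma> w)) (\<gamma> v) (\<gamma> (fst p), snd p)"
proof -
  obtain y t where p: "p = (y, t)" by (cases p)
  have t0: "t \<noteq> 0" using t p by simp
  have sym: "A v y = A y v" using A2 by simp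
  have quad0: "A (y + t *\<^sub>R v) (y + t *\<^sub>R v) = A y y + t * A y v + t * A v y + t * t * A v v"
    by (simp add: blinfun.bilinear_simps algebra_simps)
  have quad: "A (y + t *\<^sub>R v) (y + t *\<^sub>R v) = A y y + 2 * t * A y v + t * t * A v v"
    unfolding quad0 by (subst sym) simp
  have "gb \<beta> w (y + t *\<^sub>R v) - gb \<beta> w y
      = t * (\<beta> * A y v + \<beta> * t / 2 * A v v - f v) + (J (\<gamma> w) (\<gamma> y + t *\<^sub>R \<gamma> v) - J (\<gamma> w) (\<gamma> y))"
  proof -
    have "gb \<beta> w (y + t *\<^sub>R v) = (\<beta>/2) * (A y y + 2 * t * A y v + t * t * A v v) - (f y + t * f v) + J (\<gamma> w) (\<gamma> y + t *\<^sub>R \<gamma> v)"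
      by (simp only: gb_def quad) (simp add: blinfun.bilinear_simps)
    then show ?thesis by (simp add: gb_def algebra_simps)
  qed
  then show ?thesis unfolding dq_def p fst_conv snd_conv
    by (subst (1) \<open>gb \<beta> w (y + t *\<^sub>R v) - gb \<beta> w y = _\<close>) (use t0 in \<open>simp add: field_simps\<close>)
qed

lemma J_llip: "\<exists>e>0. \<exists>L. L-lipschitz_on (ball z e) (J w')"
  using J1 unfolding locally_lipschitz_def by blast

lemma gb_upper:
  "clarke_dd (gb \<beta> w) u v \<le> \<beta> * A u v - f v + clarke_dd (J (\<gamma> w)) (\<gamma> u) (\<gamma> v)"
proof -
  obtain e L where e: "e > 0" and lip: "L-lipschitz_on (ball u e) (gb \<beta> w)" using llip_gb by blast
  obtain e' L' where e': "e' > 0" and lip': "L'-lipschitz_on (ball (\<gamma> u) e') (J (\<gamma> w))"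
    using J_llip by blast
  show ?thesis
  proof (rule cdd_upper[OF e lip])
    fix \<epsilon> :: real assume eps: "\<epsilon> > 0"
    then have eps2: "\<epsilon>/2 > 0" by simp
    have fl: "filterlim (\<lambda>p. (\<gamma> (fst p), snd p)) (CF (\<gamma> u)) (CF u)"
      unfolding CF_def[of "\<gamma> u"] filterlim_at
    proof
      show "\<forall>\<^sub>F p in CF u. (\<gamma> (fst p), snd p) \<in> UNIV \<times> {0<..} \<and> (\<gamma> (fst p), snd p) \<noteq> (\<gamma> u, 0)"
        using CF_pos by eventually_elim auto
      have "((\<lambda>p. \<gamma> (fst p)) \<longlongrightarrow> \<gamma> u) (CF u)"
        by (rule blinfun.tendsto[OF tendsto_const CF_fst])
      then show "((\<lambda>p. (\<gamma> (fst p), snd p)) \<longlongrightarrow> (\<gamma> u, 0)) (CF u)"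
        by (intro tendsto_Pair CF_snd)
    qed
    have E1: "eventually (\<lambda>p. dq (J (\<gamma> w)) (\<gamma> v) (\<gamma> (fst p), snd p) < clarke_dd (J (\<gamma> w)) (\<gamma> u) (\<gamma> v) + \<epsilon>/2) (CF u)"
      using filterlim_iff[THEN iffD1, OF fl, rule_format, OF cdd_ev[OF e' lip' eps2]] .
    have tf: "((\<lambda>p. A (fst p) v) \<longlongrightarrow> A u v) (CF u)"
      by (rule blinfun.tendsto[OF blinfun.tendsto[OF tendsto_const CF_fst] tendsto_const])
    have ts: "((\<lambda>p. snd p) \<longlongrightarrow> 0) (CF u)" using CF_snd[of u] by (simp add: o_def)
    have lim: "((\<lambda>p. \<beta> * A (fst p) v + \<beta> * snd p / 2 * A v v) \<longlongrightarrow> \<beta> * A u v + \<beta> * 0 / 2 * A v v) (CF u)"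
      by (intro tendsto_add tendsto_mult tendsto_divide tendsto_const tf ts) simp
    have E2: "eventually (\<lambda>p. dist (\<beta> * A (fst p) v + \<beta> * snd p / 2 * A v v) (\<beta> * A u v) < \<epsilon>/2) (CF u)"
      using tendstoD[OF lim eps2] by simp
    show "eventually (\<lambda>p. dq (gb \<beta> w) v p \<le> \<beta> * A u v - f v + clarke_dd (J (\<gamma> w)) (\<gamma> u) (\<gamma> v) + \<epsilon>) (CF u)"
      using E1 E2 CF_pos
    proof eventually_elim
      case (elim p)
      have "dq (gb \<beta> w) v p = \<beta> * A (fst p) v + \<beta> * snd p / 2 * A v v - f v
          + dq (J (\<gamma> w)) (\<gamma> v) (\<gamma> (fst p), snd p)" using elim(3) by (intro dq_gb) simp
      moreover have "\<beta> * A (fst p) v + \<beta> * snd p / 2 * A v v < \<beta> * A u v + \<epsilon>/2"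
        using elim(2) unfolding dist_real_def abs_less_iff by linarith
      ultimately show ?case using elim(1) by simp
    qed
  qed
qed

definition cg where "cg = norm \<gamma>"

lemma cg0: "cg \<ge> 0" by (simp add: cg_def)

lemma gam_bound: "norm (\<gamma> a - \<gamma> b) \<le> cg * norm (a - b)"
  unfolding cg_def blinfun.diff_right[symmetric] by (rule norm_blinfun)

lemma sum_bound:
  assumes b0: "\<beta> \<ge> 0"
  shows "clarke_dd (gb \<beta> w1) a (b - a) + clarke_dd (gb \<beta> w2) b (a - b)
     \<le> - \<beta> * mA * (norm (a - b))\<^sup>2 + ma * cg\<^sup>2 * (norm (a - b))\<^sup>2 + mL * cg\<^sup>2 * norm (w1 - w2) * norm (a - b)"
proof -
  have u1: "clarke_dd (gb \<beta> w1) a (b - a) \<le> \<beta> * A a (b - a) - f (b - a) + clarke_dd (J (\<gamma> w1)) (\<gamma> a) (\<gamma> b - \<gamma> a)"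
    using gb_upper[of \<beta> w1 a "b - a"] by (simp add: blinfun.diff_right)
  have u2: "clarke_dd (gb \<beta> w2) b (a - b) \<le> \<beta> * A b (a - b) - f (a - b) + clarke_dd (J (\<gamma> w2)) (\<gamma> b) (\<gamma> a - \<gamma> b)"
    using gb_upper[of \<beta> w2 b "a - b"] by (simp add: blinfun.diff_right)
  have j3: "clarke_dd (J (\<gamma> w1)) (\<gamma> a) (\<gamma> b - \<gamma> a) + clarke_dd (J (\<gamma> w2)) (\<gamma> b) (\<gamma> a - \<gamma> b)
      \<le> ma * (norm (\<gamma> a - \<gamma> b))\<^sup>2 + mL * norm (\<gamma> w1 - \<gamma> w2) * norm (\<gamma> a - \<gamma> b)"
    using J3(3) by blast
  have Aeq: "A a (b - a) + A b (a - b) = - A (a - b) (a - b)"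
    by (simp add: blinfun.bilinear_simps algebra_simps)
  have feq: "f (b - a) + f (a - b) = 0" by (simp add: blinfun.bilinear_simps)
  have Acoer: "A (a - b) (a - b) \<ge> mA * (norm (a - b))\<^sup>2" using A3(2) by blast
  have g1: "norm (\<gamma> a - \<gamma> b) \<le> cg * norm (a - b)" by (rule gam_bound)
  have g2: "norm (\<gamma> w1 - \<gamma> w2) \<le> cg * norm (w1 - w2)" by (rule gam_bound)
  have n1: "(norm (\<gamma> a - \<gamma> b))\<^sup>2 \<le> cg\<^sup>2 * (norm (a - b))\<^sup>2"
    using power_mono[OF g1 norm_ge_zero, of 2] by (simp add: power_mult_distrib)
  have n2: "norm (\<gamma> w1 - \<gamma> w2) * norm (\<gamma> a - \<gamma> b) \<le> (cg * norm (w1 - w2)) * (cg * norm (a - b))"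
    using g1 g2 cg0 by (intro mult_mono) auto
  have "ma * (norm (\<gamma> a - \<gamma> b))\<^sup>2 \<le> ma * (cg\<^sup>2 * (norm (a - b))\<^sup>2)"
    using n1 J3(1) by (rule mult_left_mono)
  moreover have "mL * (norm (\<gamma> w1 - \<gamma> w2) * norm (\<gamma> a - \<gamma> b)) \<le> mL * ((cg * norm (w1 - w2)) * (cg * norm (a - b)))"
    using n2 J3(2) by (rule mult_left_mono)
  moreover have "\<beta> * A (a - b) (a - b) \<ge> \<beta> * (mA * (norm (a - b))\<^sup>2)"
    using Acoer b0 by (rule mult_left_mono)
  ultimately show ?thesis
    using u1 u2 j3 Aeq feq
    by (simp add: power2_eq_square algebra_simps) (smt (verit, best) distrib_left)
qed

end



context setting begin

lemma core:
  assumes s1: "\<forall>v. 0 \<le> clarke_dd (gb 1 w1) u1 v" and s2: "\<forall>v. 0 \<le> clarke_dd (gb 1 w2) u2 v"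
  shows "(mA - ma * cg\<^sup>2) * norm (u1 - u2) \<le> mL * cg\<^sup>2 * norm (w1 - w2)"
proof -
  have "0 \<le> clarke_dd (gb 1 w1) u1 (u2 - u1) + clarke_dd (gb 1 w2) u2 (u1 - u2)"
    using s1 s2 by (simp add: add_nonneg_nonneg)
  also have "\<dots> \<le> - 1 * mA * (norm (u1 - u2))\<^sup>2 + ma * cg\<^sup>2 * (norm (u1 - u2))\<^sup>2 + mL * cg\<^sup>2 * norm (w1 - w2) * norm (u1 - u2)"
    by (rule sum_bound) simp
  finally have "(mA - ma * cg\<^sup>2) * norm (u1 - u2) * norm (u1 - u2) \<le> (mL * cg\<^sup>2 * norm (w1 - w2)) * norm (u1 - u2)"
    by (simp add: power2_eq_square algebra_simps)
  then show ?thesis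
  proof (cases "norm (u1 - u2) = 0")
    case True
    then show ?thesis using J3(2) by simp
  next
    case False
    then have "norm (u1 - u2) > 0" by simp
    then show ?thesis using \<open>_ * norm (u1 - u2) * norm (u1 - u2) \<le> _ * norm (u1 - u2)\<close>
      by (simp add: mult_le_cancel_right)
  qed
qed

definition \<theta> where "\<theta> = ma * cg\<^sup>2 / mA"

lemma theta: "0 \<le> \<theta>" "\<theta> < 1" "\<theta> * mA = ma * cg\<^sup>2"
proof -
  show "0 \<le> \<theta>" unfolding \<theta>_def using J3(1) A3(1) by simp
  show "\<theta> * mA = ma * cg\<^sup>2" unfolding \<theta>_def using A3(1) by simp
  have "ma * cg\<^sup>2 \<le> (ma + mL) * cg\<^sup>2" using J3(2) by (simp add: algebra_simps)
  then have "ma * cg\<^sup>2 < mA" using S by (simp add: cg_def)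
  then show "\<theta> < 1" unfolding \<theta>_def using A3(1) by simp
qed

lemma psi_mono: "clarke_dd (gb \<theta> w) a (b - a) + clarke_dd (gb \<theta> w) b (a - b) \<le> 0"
proof -
  have "clarke_dd (gb \<theta> w) a (b - a) + clarke_dd (gb \<theta> w) b (a - b)
     \<le> - \<theta> * mA * (norm (a - b))\<^sup>2 + ma * cg\<^sup>2 * (norm (a - b))\<^sup>2 + mL * cg\<^sup>2 * norm (w - w) * norm (a - b)"
    by (rule sum_bound) (rule theta(1))
  also have "\<dots> = 0" using theta(3) by simp
  finally show ?thesis .
qed

lemma psi_conv:
  assumes r: "0 \<le> r" "r \<le> 1"
  shows "gb \<theta> w (x + r *\<^sub>R (y - x)) \<le> (1 - r) * gb \<theta> w x + r * gb \<theta> w y"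
proof -
  define \<psi> where "\<psi> = gb \<theta> w"
  define d where "d = y - x"
  define h where "h t = \<psi> (x + t *\<^sub>R d)" for t
  have hc: "continuous_on {0..1} h"
  proof -
    have c1: "continuous_on {0..1} (\<lambda>t. x + t *\<^sub>R d)" by (intro continuous_intros)
    have c2: "continuous_on UNIV \<psi>" unfolding \<psi>_def
      by (simp add: continuous_at_imp_continuous_on cont_gb)
    show ?thesis unfolding h_def
      by (rule continuous_on_compose2[OF c2 c1]) simp
  qed
  have "h r \<le> (1 - r) * h 0 + r * h 1"
  proof (rule conv1d[OF hc _ r])
    fix q q' c1 c2 :: real
    assume q: "0 \<le> q" "q < q'" "q' \<le> 1" and c: "c2 < c1"
      and f1: "\<exists>\<^sub>F \<tau> in at_right 0. h (q + \<tau>) - h q > c1 * \<tau>"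
      and f2: "\<exists>\<^sub>F \<tau> in at_right 0. h (q' - \<tau>) - h q' > - c2 * \<tau>"
    define a where "a = x + q *\<^sub>R d"
    define b where "b = x + q' *\<^sub>R d"
    define l where "l = q' - q"
    have l0: "l > 0" using q by (simp add: l_def)
    have ba: "b - a = l *\<^sub>R d" by (simp add: a_def b_def l_def algebra_simps)
    obtain ea La where ea: "ea > 0" and la: "La-lipschitz_on (ball a ea) \<psi>" using llip_gb \<psi>_def by blast
    obtain eb Lb where eb: "eb > 0" and lb: "Lb-lipschitz_on (ball b eb) \<psi>" using llip_gb \<psi>_def by blast
    have "\<exists>\<^sub>F p in CF a. fst p = a \<and> snd p > 0 \<and> h (q + snd p * l) - h q > c1 * (snd p * l)"
      by (rule freq_CF[OF l0 f1])
    then have "\<exists>\<^sub>F p in CF a. c1 * l \<le> dq \<psi> (b - a) p"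
    proof (rule frequently_elim1)
      fix p :: "'v \<times> real" assume p: "fst p = a \<and> snd p > 0 \<and> h (q + snd p * l) - h q > c1 * (snd p * l)"
      have eq: "a + snd p *\<^sub>R (b - a) = x + (q + snd p * l) *\<^sub>R d"
        by (simp only: ba) (simp add: a_def algebra_simps)
      have "dq \<psi> (b - a) p = (\<psi> (a + snd p *\<^sub>R (b - a)) - \<psi> a) / snd p"
        using p by (simp add: dq_def)
      also have "\<dots> = (h (q + snd p * l) - h q) / snd p"
        by (simp only: eq) (simp add: h_def a_def)
      finally have "dq \<psi> (b - a) p = (h (q + snd p * l) - h q) / snd p" .
      moreover have "c1 * l < (h (q + snd p * l) - h q) / snd p"
        using p by (simp add: field_simps)
      ultimately show "c1 * l \<le> dq \<psi> (b - a) p" by simp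
    qed
    then have la1: "c1 * l \<le> clarke_dd \<psi> a (b - a)" by (rule cdd_lower[OF ea la])
    have "\<exists>\<^sub>F p in CF b. fst p = b \<and> snd p > 0 \<and> h (q' - snd p * l) - h q' > - c2 * (snd p * l)"
      by (rule freq_CF[OF l0 f2])
    then have "\<exists>\<^sub>F p in CF b. - c2 * l \<le> dq \<psi> (a - b) p"
    proof (rule frequently_elim1)
      fix p :: "'v \<times> real" assume p: "fst p = b \<and> snd p > 0 \<and> h (q' - snd p * l) - h q' > - c2 * (snd p * l)"
      have ab: "a - b = - (l *\<^sub>R d)" using ba by (simp add: algebra_simps)
      have eq: "b + snd p *\<^sub>R (a - b) = x + (q' - snd p * l) *\<^sub>R d"
        by (simp only: ab) (simp add: b_def algebra_simps)
      have "dq \<psi> (a - b) p = (\<psi> (b + snd p *\<^sub>R (a - b)) - \<psi> b) / snd p"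
        using p by (simp add: dq_def)
      also have "\<dots> = (h (q' - snd p * l) - h q') / snd p"
        by (simp only: eq) (simp add: h_def b_def)
      finally have "dq \<psi> (a - b) p = (h (q' - snd p * l) - h q') / snd p" .
      moreover have "- c2 * l < (h (q' - snd p * l) - h q') / snd p"
        using p by (simp add: field_simps)
      ultimately show "- c2 * l \<le> dq \<psi> (a - b) p" by simp
    qed
    then have lb1: "- c2 * l \<le> clarke_dd \<psi> b (a - b)" by (rule cdd_lower[OF eb lb])
    have "clarke_dd \<psi> a (b - a) + clarke_dd \<psi> b (a - b) \<le> 0" unfolding \<psi>_def by (rule psi_mono)
    moreover have "(c1 - c2) * l > 0" using c l0 by simp
    ultimately show False using la1 lb1 by (simp add: algebra_simps)
  qed
  then show ?thesis by (simp add: h_def \<psi>_def d_def)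
qed

end



context setting begin

lemma gb_split: "gb 1 w v = gb \<theta> w v + ((1 - \<theta>) / 2) * A v v"
  unfolding gb_def by (simp add: field_simps)

lemma quad_mid: "A ((1/2) *\<^sub>R (x + y)) ((1/2) *\<^sub>R (x + y)) = (A x x + A y y) / 2 - A (y - x) (y - x) / 4"
proof -
  have sym: "A y x = A x y" using A2 by simp
  have q1: "A (x + y) (x + y) = A x x + A x y + A y x + A y y"
    by (simp add: blinfun.bilinear_simps)
  have q2: "A (y - x) (y - x) = A y y - A y x - A x y + A x x"
    by (simp add: blinfun.bilinear_simps)
  have q3: "A ((1/2) *\<^sub>R (x + y)) ((1/2) *\<^sub>R (x + y)) = (1/4) * A (x + y) (x + y)"
    by (simp only: blinfun.scaleR_left blinfun.scaleR_right) simp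
  show ?thesis using q1 q2 q3 sym by argo
qed

definition \<kappa> where "\<kappa> = (1 - \<theta>) * mA / 8"

lemma kappa: "\<kappa> > 0" unfolding \<kappa>_def using theta(2) A3(1) by simp

lemma midpoint:
  "gb 1 w ((1/2) *\<^sub>R (x + y)) \<le> (gb 1 w x + gb 1 w y) / 2 - \<kappa> * (norm (y - x))\<^sup>2"
proof -
  have mx: "(1/2) *\<^sub>R (x + y) = x + (1/2) *\<^sub>R (y - x)"
  proof -
    have "x + (1/2) *\<^sub>R (y - x) = (1/2 + 1/2) *\<^sub>R x + (1/2) *\<^sub>R (y - x)" by simp
    also have "\<dots> = (1/2) *\<^sub>R (x + y)"
      by (simp only: scaleR_add_left scaleR_diff_right scaleR_add_right) (simp add: algebra_simps)
    finally show ?thesis by simp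
  qed
  have pc: "gb \<theta> w ((1/2) *\<^sub>R (x + y)) \<le> (1 - 1/2) * gb \<theta> w x + (1/2) * gb \<theta> w y"
    unfolding mx by (rule psi_conv) auto
  have c0: "(1 - \<theta>) / 2 \<ge> 0" using theta(2) by simp
  have co: "A (y - x) (y - x) \<ge> mA * (norm (y - x))\<^sup>2" using A3(2) by blast
  have "gb 1 w ((1/2) *\<^sub>R (x + y)) = gb \<theta> w ((1/2) *\<^sub>R (x + y)) + ((1 - \<theta>) / 2) * ((A x x + A y y) / 2 - A (y - x) (y - x) / 4)"
    by (simp only: gb_split quad_mid)
  also have "\<dots> \<le> (1 - 1/2) * gb \<theta> w x + (1/2) * gb \<theta> w y + ((1 - \<theta>) / 2) * ((A x x + A y y) / 2 - A (y - x) (y - x) / 4)"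
    using pc by simp
  also have "\<dots> = (gb 1 w x + gb 1 w y) / 2 - ((1 - \<theta>) / 8) * A (y - x) (y - x)"
    by (simp add: gb_split algebra_simps)
  also have "\<dots> \<le> (gb 1 w x + gb 1 w y) / 2 - ((1 - \<theta>) / 8) * (mA * (norm (y - x))\<^sup>2)"
    using co theta(2) by (simp add: mult_left_mono)
  also have "\<dots> = (gb 1 w x + gb 1 w y) / 2 - \<kappa> * (norm (y - x))\<^sup>2"
    by (simp add: \<kappa>_def)
  finally show ?thesis .
qed

lemma psi_lower: "\<exists>C L. \<forall>y. gb \<theta> w y \<ge> C - L * norm y"
proof -
  define \<psi> where "\<psi> = gb \<theta> w"
  obtain e L where e: "e > 0" and lip: "L-lipschitz_on (ball 0 e) \<psi>" using llip_gb \<psi>_def by blast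
  have L0: "L \<ge> 0" using lipschitz_on_nonneg[OF lip] .
  have "\<psi> y \<ge> \<psi> 0 - L * norm y" for y
  proof (cases "norm y < e")
    case True
    then have "\<bar>\<psi> y - \<psi> 0\<bar> \<le> L * dist y 0"
      using lipschitz_onD[OF lip, of y 0] e by (simp add: dist_real_def)
    then show ?thesis by (simp add: abs_le_iff)
  next
    case False
    then have ny: "norm y > 0" "norm y \<ge> e" using e by auto
    define s where "s = e / (2 * norm y)"
    have s0: "s > 0" using e ny by (simp add: s_def)
    have s1: "s \<le> 1" using e ny by (simp add: s_def field_simps)
    have nsy: "norm (s *\<^sub>R y) = e / 2" using ny s0 e by (simp add: s_def)
    have "\<bar>\<psi> (s *\<^sub>R y) - \<psi> 0\<bar> \<le> L * dist (s *\<^sub>R y) 0"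
      using lipschitz_onD[OF lip, of "s *\<^sub>R y" 0] e nsy by (simp add: dist_real_def)
    then have l1: "\<psi> (s *\<^sub>R y) \<ge> \<psi> 0 - L * (s * norm y)"
      using s0 by (simp add: abs_le_iff)
    have "\<psi> (0 + s *\<^sub>R (y - 0)) \<le> (1 - s) * \<psi> 0 + s * \<psi> y"
      unfolding \<psi>_def by (rule psi_conv) (use s0 s1 in auto)
    then have "s * \<psi> y \<ge> s * (\<psi> 0 - L * norm y)" using l1 by (simp add: algebra_simps)
    then show ?thesis using s0 by simp
  qed
  then show ?thesis unfolding \<psi>_def by blast
qed

lemma phi_bdd: "bdd_below (range (gb 1 w))"
proof -
  obtain C L where CL: "\<And>y. gb \<theta> w y \<ge> C - L * norm y" using psi_lower by blast
  define k where "k = (1 - \<theta>) / 2 * mA"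
  have k0: "k > 0" unfolding k_def using theta(2) A3(1) by simp
  have "gb 1 w y \<ge> C - L\<^sup>2 / (4 * k)" for y
  proof -
    have Ay: "(1 - \<theta>) / 2 * A y y \<ge> k * (norm y)\<^sup>2"
      unfolding k_def using A3(2) theta(2) by (simp add: mult_left_mono)
    have sq: "0 \<le> (2 * k * norm y - L)\<^sup>2" by simp
    have "k * (norm y)\<^sup>2 - L * norm y \<ge> - L\<^sup>2 / (4 * k)"
    proof -
      have "(2 * k * norm y - L)\<^sup>2 = 4 * k * (k * (norm y)\<^sup>2 - L * norm y) + L\<^sup>2"
        by (simp add: power2_eq_square algebra_simps)
      then have "- L\<^sup>2 \<le> 4 * k * (k * (norm y)\<^sup>2 - L * norm y)"
        using sq by linarith
      then have "(- L\<^sup>2) / (4 * k) \<le> k * (norm y)\<^sup>2 - L * norm y"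
        by (subst pos_divide_le_eq) (use k0 in \<open>simp_all add: mult.commute\<close>)
      then show ?thesis by simp
    qed
    then show ?thesis using CL[of y] Ay gb_split[of w y] by linarith
  qed
  then show ?thesis by (intro bdd_belowI2) blast
qed

lemma minimizer: "\<exists>u. \<forall>y. gb 1 w u \<le> gb 1 w y"
proof -
  define \<phi> where "\<phi> = gb 1 w"
  define m where "m = Inf (range \<phi>)"
  have bdd: "bdd_below (range \<phi>)" unfolding \<phi>_def by (rule phi_bdd)
  have mle: "m \<le> \<phi> y" for y unfolding m_def by (rule cInf_lower[OF _ bdd]) simp
  have "\<exists>x. \<phi> x < m + inverse (real (Suc n))" for n
  proof -
    have "Inf (range \<phi>) < m + inverse (real (Suc n))" unfolding m_def by simp
    then show ?thesis using cInf_lessD[of "range \<phi>"] by auto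
  qed
  then obtain X where X: "\<And>n. \<phi> (X n) < m + inverse (real (Suc n))" by metis
  have XN: "\<phi> (X n) < m + inverse (real (Suc N))" if "N \<le> n" for n N
  proof -
    have "inverse (real (Suc n)) \<le> inverse (real (Suc N))" by (rule le_imp_inverse_le) (use that in auto)
    then show ?thesis using X[of n] by linarith
  qed
  have "Cauchy X"
  proof (rule CauchyI)
    fix \<epsilon> :: real assume eps: "\<epsilon> > 0"
    have "\<kappa> * \<epsilon>\<^sup>2 > 0" using kappa eps by simp
    then obtain N where N: "inverse (real (Suc N)) < \<kappa> * \<epsilon>\<^sup>2" using reals_Archimedean by blast
    show "\<exists>M. \<forall>i\<ge>M. \<forall>j\<ge>M. norm (X i - X j) < \<epsilon>"
    proof (intro exI allI impI)
      fix i j assume i: "N \<le> i" and j: "N \<le> j"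
      have mid: "\<phi> ((1/2) *\<^sub>R (X j + X i)) \<le> (\<phi> (X j) + \<phi> (X i)) / 2 - \<kappa> * (norm (X i - X j))\<^sup>2"
        unfolding \<phi>_def by (rule midpoint)
      have "\<kappa> * (norm (X i - X j))\<^sup>2 < \<kappa> * \<epsilon>\<^sup>2"
        using mid mle[of "(1/2) *\<^sub>R (X j + X i)"] XN[OF i] XN[OF j] N by argo
      then have "(norm (X i - X j))\<^sup>2 < \<epsilon>\<^sup>2" using kappa by simp
      then show "norm (X i - X j) < \<epsilon>" by (rule power_less_imp_less_base) (use eps in simp)
    qed
  qed
  then obtain u where u: "X \<longlonglongrightarrow> u" using Cauchy_convergent_iff convergent_def by blast
  have l1: "(\<lambda>n. \<phi> (X n)) \<longlonglongrightarrow> \<phi> u"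
    unfolding \<phi>_def by (rule isCont_tendsto_compose[OF cont_gb u])
  have l2: "(\<lambda>n. m + inverse (real (Suc n))) \<longlonglongrightarrow> m + 0"
    by (intro tendsto_add tendsto_const LIMSEQ_inverse_real_of_nat)
  have "\<phi> u \<le> m + 0"
    by (rule LIMSEQ_le[OF l1 l2]) (use X in \<open>auto intro: less_imp_le\<close>)
  then have "\<phi> u \<le> m" by simp
  then have "\<forall>y. \<phi> u \<le> \<phi> y" using mle order_trans by blast
  then show ?thesis unfolding \<phi>_def by blast
qed

lemma min_stat:
  assumes mn: "\<forall>y. gb 1 w u \<le> gb 1 w y"
  shows "\<forall>v. 0 \<le> clarke_dd (gb 1 w) u v"
proof
  fix v
  obtain e L where e: "e > 0" and lip: "L-lipschitz_on (ball u e) (gb 1 w)" using llip_gb by blast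
  have tr: "\<exists>\<^sub>F \<tau> in at_right (0::real). True" by (simp add: frequently_def)
  have "\<exists>\<^sub>F p in CF u. fst p = u \<and> snd p > 0 \<and> True" by (rule freq_CF[where l=1 and P="\<lambda>_. True" and a=u, OF _ tr]) simp
  then have "\<exists>\<^sub>F p in CF u. 0 \<le> dq (gb 1 w) v p"
  proof (rule frequently_elim1)
    fix p :: "'v \<times> real" assume p: "fst p = u \<and> snd p > 0 \<and> True"
    have "gb 1 w u \<le> gb 1 w (u + snd p *\<^sub>R v)" using mn by blast
    then show "0 \<le> dq (gb 1 w) v p" using p by (simp add: dq_def)
  qed
  then show "0 \<le> clarke_dd (gb 1 w) u v" by (rule cdd_lower[OF e lip])
qed

lemma exist_fix: "\<exists>u. \<forall>v. 0 \<le> clarke_dd (gb 1 u) u v"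
proof -
  have ex: "\<exists>u. \<forall>v. 0 \<le> clarke_dd (gb 1 w) u v" for w
    using minimizer[of w] min_stat by blast
  define T where "T w = (SOME u. \<forall>v. 0 \<le> clarke_dd (gb 1 w) u v)" for w
  have TP: "\<forall>v. 0 \<le> clarke_dd (gb 1 w) (T w) v" for w
    unfolding T_def by (rule someI_ex[OF ex])
  define \<mu> where "\<mu> = mA - ma * cg\<^sup>2"
  have mu: "\<mu> > mL * cg\<^sup>2" using S by (simp add: \<mu>_def cg_def algebra_simps)
  have mL0: "mL * cg\<^sup>2 \<ge> 0" using J3(2) by simp
  have mu0: "\<mu> > 0" using mu mL0 by linarith
  define k where "k = mL * cg\<^sup>2 / \<mu>"
  have k0: "0 \<le> k" unfolding k_def using mL0 mu0 by simp
  have k1: "k < 1" unfolding k_def using mu mu0 by simp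
  have "dist (T a) (T b) \<le> k * dist a b" for a b
  proof -
    have "\<mu> * norm (T a - T b) \<le> mL * cg\<^sup>2 * norm (a - b)"
      unfolding \<mu>_def by (rule core[OF TP TP])
    then show ?thesis using mu0 by (simp add: k_def dist_norm field_simps)
  qed
  then have "\<exists>!x. T x = x" using banach_fix_type[OF k0 k1] by blast
  then obtain u where "T u = u" by blast
  then show ?thesis using TP[of u] by metis
qed

lemma uniq:
  assumes "\<forall>v. 0 \<le> clarke_dd (gb 1 u1) u1 v" "\<forall>v. 0 \<le> clarke_dd (gb 1 u2) u2 v"
  shows "u1 = u2"
proof -
  have c: "(mA - ma * cg\<^sup>2) * norm (u1 - u2) \<le> mL * cg\<^sup>2 * norm (u1 - u2)"
    by (rule core[OF assms])
  have pos: "mA - ma * cg\<^sup>2 - mL * cg\<^sup>2 > 0" using S by (simp add: cg_def algebra_simps)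
  have "(mA - ma * cg\<^sup>2 - mL * cg\<^sup>2) * norm (u1 - u2) \<le> 0" using c by (simp add: algebra_simps)
  then have "norm (u1 - u2) \<le> 0" using pos by (simp add: mult_le_0_iff)
  then show ?thesis by simp
qed

end

theorem lemma3:
  fixes \<gamma> :: "'v::banach \<Rightarrow>\<^sub>L 'x::banach"
    and A :: "'v \<Rightarrow>\<^sub>L ('v \<Rightarrow>\<^sub>L real)"
    and f :: "'v \<Rightarrow>\<^sub>L real"
    and J :: "'x \<Rightarrow> 'x \<Rightarrow> real"
    and m_A m_\<alpha> m_L c\<^sub>0 c\<^sub>1 c\<^sub>2 :: real
  assumes refl: "reflexive_space TYPE('v)"
    and A2: "\<forall>u v. A u v = A v u"
    and A3: "m_A > 0" "\<forall>u. A u u \<ge> m_A * (norm u)\<^sup>2"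
    and J1: "\<forall>w. locally_lipschitz (J w)"
    and J2: "c\<^sub>0 \<ge> 0" "c\<^sub>1 \<ge> 0" "c\<^sub>2 \<ge> 0"
      "\<forall>w v. \<forall>\<xi>\<in>clarke_subdiff (J w) v. norm \<xi> \<le> c\<^sub>0 + c\<^sub>1 * norm v + c\<^sub>2 * norm w"
    and J3: "m_\<alpha> \<ge> 0" "m_L \<ge> 0"
      "\<forall>w1 w2 v1 v2. clarke_dd (J w1) v1 (v2 - v1) + clarke_dd (J w2) v2 (v1 - v2)
          \<le> m_\<alpha> * (norm (v1 - v2))\<^sup>2 + m_L * norm (w1 - w2) * norm (v1 - v2)"
    and S: "m_A > (m_\<alpha> + m_L) * (norm \<gamma>)\<^sup>2"
  shows "\<exists>!u::'v. 0 \<in> clarke_subdiff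
            (\<lambda>v. (1/2) * A v v - f v + J (\<gamma> u) (\<gamma> v)) u"
proof -
  interpret setting \<gamma> A f J m_A m_\<alpha> m_L
    by (unfold_locales) (use A2 A3 J1 J3 S in blast)+
  have eqf: "(\<lambda>v. (1/2) * A v v - f v + J (\<gamma> u) (\<gamma> v)) = gb 1 u" for u
    by (simp add: gb_def fun_eq_iff)
  have sd: "0 \<in> clarke_subdiff g u \<longleftrightarrow> (\<forall>v. 0 \<le> clarke_dd g u v)" for g u
    by (simp add: clarke_subdiff_def)
  show ?thesis
    unfolding eqf sd using exist_fix uniq by blast
qed


end
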